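(* For each fixed $\kappa\in(1/2,1)$, let $\lambda^+_{c,\kappa}(\mathcal K,\mathcal L)$ be the supremum of all $\lambda$ for which there is a constant $C=C(\lambda,\kappa)$ such that for all $t_0\in\mathbb R$, $R>0$ and all $u\in\mathcal V_{\rm loc}(\mathcal Q^K_R(0;t_0))$ satisfying $\mathcal Lu=0$ in $\mathcal Q^K_R(0;t_0)$ and $u=0$ for $x\in\partial\mathcal K$, $$|u(x;t)|\le C\Big(\frac{|x'|}{R}\Big)^\lambda\sup_{\mathcal Q^K_{\kappa R}(0;t_0)}|u|\qquad\text{for }(x;t)\in\mathcal Q^K_{R/2}(0;t_0).$$ Then $\lambda^+_{c,\kappa}(\mathcal K,\mathcal L)$ does not depend on $\kappa\in(1/2,1)$. The same holds with $\mathcal L$ replaced by $\widehat{\mathcal L}$; hence the critical exponents $\lambda_c^\pm(\mathcal K,\mathcal L)$ do not depend on the choice of $\kappa$.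
   Context: Let $2\le m\le n$, $x=(x',x'')$ with $x'\in\mathbb R^m$, $x''\in\mathbb R^{n-m}$. $K\subset\mathbb R^m$ is an open cone with $\omega=K\cap\mathbb S^{m-1}$ of class $C^{1,1}$, $\mathcal K=K\times\mathbb R^{n-m}$. $A_{ij}(t)$ are real measurable symmetric coefficients with $\nu|\xi|^2\le A_{ij}(t)\xi_i\xi_j\le\nu^{-1}|\xi|^2$, $\nu>0$; $\mathcal Lu=\partial_tu-A_{ij}(t)D_iD_ju$, $\widehat{\mathcal L}u=\partial_tu-A_{ij}(-t)D_iD_ju$. $\mathcal Q^K_R(x_0;t_0)=\big((B^m_R(x_0')\cap K)\times B^{n-m}_R(x_0'')\big)\times(t_0-R^2,t_0]$. $\mathcal V(\mathcal Q)$: functions with finite $\sup_\tau\|u(\cdot,\tau)\|_{L_2}+\|Du\|_{L_2(\mathcal Q)}$; $\mathcal V_{\rm loc}(\mathcal Q^K_R(x_0;t_0))$: functions in $\mathcal V(\mathcal Q^K_{R'}(x_0;t_0))$ for every $R'<R$. The critical exponent $\lambda_c^+(\mathcal K,\mathcal L)$ is defined as the supremum of $\lambda$ for which the displayed estimate holds for some $\kappa\in(1/2,1)$, and $\lambda_c^-(\mathcal K,\mathcal L)=\lambda_c^+(\mathcal K,\widehat{\mathcal L})$. *)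

theory Defs
  imports "HOL-Analysis.Analysis" "HOL-Probability.Essential_Supremum"
begin

text \<open>Space R^n is real^'n; the index set I (card I = m) singles out the
  coordinates x' in R^m, the remaining ones give x'' in R^(n-m).
  R^m is identified with the coordinate subspace subsp I.\<close>

definition xp :: "'n set \<Rightarrow> real^'n \<Rightarrow> real^'n" where
  "xp I x = (\<chi> i. if i \<in> I then x $ i else 0)"

definition xpp :: "'n set \<Rightarrow> real^'n \<Rightarrow> real^'n" where
  "xpp I x = (\<chi> i. if i \<in> I then 0 else x $ i)"

definition subsp :: "'n set \<Rightarrow> (real^'n) set" where
  "subsp I = {y. \<forall>i. i \<notin> I \<longrightarrow> y $ i = 0}"

definition open_cone :: "'n set \<Rightarrow> (real^'n) set \<Rightarrow> bool" where
  "open_cone I K \<longleftrightarrow> K \<noteq> {} \<and> K \<subseteq> subsp I \<and> openin (top_of_set (subsp I)) K \<and>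
     (\<forall>y\<in>K. \<forall>c>0. c *\<^sub>R y \<in> K)"

text \<open>omega = K \<inter> S^(m-1) is of class C^{1,1}: equivalently (K being a cone),
  near every boundary point p \<noteq> 0 of K (relative to R^m), K is given by
  {rho < 0} for a C^{1,1} defining function rho whose gradient, projected on
  R^m, does not vanish.\<close>
definition C11_cone :: "'n set \<Rightarrow> (real^'n) set \<Rightarrow> bool" where
  "C11_cone I K \<longleftrightarrow> (\<forall>p. p \<in> closure K - K \<and> p \<noteq> 0 \<longrightarrow>
     (\<exists>r>0. \<exists>(\<rho>::real^'n \<Rightarrow> real) g L.
        (\<forall>y\<in>ball p r. (\<rho> has_derivative (\<lambda>v. g y \<bullet> v)) (at y)) \<and>
        (\<forall>y\<in>ball p r. \<forall>z\<in>ball p r. norm (g y - g z) \<le> L * dist y z) \<and>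
        (\<exists>v\<in>subsp I. g p \<bullet> v \<noteq> 0) \<and>
        K \<inter> ball p r = {y \<in> subsp I \<inter> ball p r. \<rho> y < 0}))"

definition coeff_ok :: "real \<Rightarrow> (real \<Rightarrow> real^'n^'n) \<Rightarrow> bool" where
  "coeff_ok \<nu> A \<longleftrightarrow> 0 < \<nu> \<and>
     (\<forall>i j. (\<lambda>t. A t $ i $ j) \<in> borel_measurable lebesgue) \<and>
     (\<forall>t. transpose (A t) = A t) \<and>
     (\<forall>t \<xi>. \<nu> * (norm \<xi>)\<^sup>2 \<le> \<xi> \<bullet> (A t *v \<xi>) \<and> \<xi> \<bullet> (A t *v \<xi>) \<le> (1/\<nu>) * (norm \<xi>)\<^sup>2)"

definition cylK :: "'n set \<Rightarrow> (real^'n) set \<Rightarrow> real \<Rightarrow> real \<Rightarrow> ((real^'n) \<times> real) set" where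
  "cylK I K R t0 = {(x,t). xp I x \<in> K \<and> norm (xp I x) < R \<and> norm (xpp I x) < R \<and>
                          t0 - R\<^sup>2 < t \<and> t \<le> t0}"

definition cylF :: "'n set \<Rightarrow> real \<Rightarrow> real \<Rightarrow> ((real^'n) \<times> real) set" where
  "cylF I R t0 = {(x,t). norm (xp I x) < R \<and> norm (xpp I x) < R \<and> t0 - R\<^sup>2 < t \<and> t \<le> t0}"

definition test_fun :: "((real^'n) \<times> real) set \<Rightarrow> ((real^'n) \<times> real \<Rightarrow> real)
     \<Rightarrow> ((real^'n) \<times> real \<Rightarrow> (real^'n) \<times> real) \<Rightarrow> bool" where
  "test_fun U \<phi> g \<longleftrightarrow> (\<forall>z. (\<phi> has_derivative (\<lambda>h. g z \<bullet> h)) (at z)) \<and> continuous_on UNIV g \<and>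
     compact (closure {z. \<phi> z \<noteq> 0}) \<and> closure {z. \<phi> z \<noteq> 0} \<subseteq> U"

definition weak_grad :: "((real^'n) \<times> real) set \<Rightarrow> ((real^'n) \<times> real \<Rightarrow> real)
     \<Rightarrow> ((real^'n) \<times> real \<Rightarrow> real^'n) \<Rightarrow> bool" where
  "weak_grad Q u Du \<longleftrightarrow> (\<forall>\<phi> g. test_fun (interior Q) \<phi> g \<longrightarrow>
     (\<forall>i. set_lebesgue_integral lebesgue Q (\<lambda>z. u z * (fst (g z)) $ i) =
          - set_lebesgue_integral lebesgue Q (\<lambda>z. (Du z) $ i * \<phi> z)))"

text \<open>The energy space V(Q): sup_tau ||u(.,tau)||_L2 < \<infinity> (essential sup in tau)
  and Du \<in> L2(Q).\<close>
definition Vspace :: "((real^'n) \<times> real) set \<Rightarrow> ((real^'n) \<times> real \<Rightarrow> real)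
     \<Rightarrow> ((real^'n) \<times> real \<Rightarrow> real^'n) \<Rightarrow> bool" where
  "Vspace Q u Du \<longleftrightarrow> set_borel_measurable lebesgue Q u \<and> set_borel_measurable lebesgue Q Du \<and>
     set_integrable lebesgue Q (\<lambda>z. (norm (Du z))\<^sup>2) \<and>
     (\<exists>M. AE \<tau> in lborel. set_integrable lebesgue {x. (x,\<tau>) \<in> Q} (\<lambda>x. (u (x,\<tau>))\<^sup>2) \<and>
            set_lebesgue_integral lebesgue {x. (x,\<tau>) \<in> Q} (\<lambda>x. (u (x,\<tau>))\<^sup>2) \<le> M) \<and>
     weak_grad Q u Du"

text \<open>u \<in> V_loc(Q^K_R(0;t0)) with weak gradient Du, u = 0 on the lateral boundary
  x \<in> \<partial>\<K> (its zero extension outside \<K> stays in V), and Lu = 0 weakly in Q^K_R(0;t0).\<close>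
definition sol :: "'n set \<Rightarrow> (real^'n) set \<Rightarrow> (real \<Rightarrow> real^'n^'n) \<Rightarrow> real \<Rightarrow> real
     \<Rightarrow> ((real^'n) \<times> real \<Rightarrow> real) \<Rightarrow> ((real^'n) \<times> real \<Rightarrow> real^'n) \<Rightarrow> bool" where
  "sol I K A R t0 u Du \<longleftrightarrow>
     (\<forall>R'. 0 < R' \<and> R' < R \<longrightarrow>
        Vspace (cylK I K R' t0) u Du \<and>
        Vspace (cylF I R' t0) (\<lambda>z. if xp I (fst z) \<in> K then u z else 0)
                              (\<lambda>z. if xp I (fst z) \<in> K then Du z else 0)) \<and>
     (\<forall>\<phi> g. test_fun (interior (cylK I K R t0)) \<phi> g \<longrightarrow>
        set_lebesgue_integral lebesgue (cylK I K R t0)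
          (\<lambda>z. - u z * snd (g z) + (A (snd z) *v Du z) \<bullet> fst (g z)) = 0)"

definition holds_est :: "'n set \<Rightarrow> (real^'n) set \<Rightarrow> (real \<Rightarrow> real^'n^'n) \<Rightarrow> real \<Rightarrow> real \<Rightarrow> bool" where
  "holds_est I K A \<kappa> lam \<longleftrightarrow> (\<exists>C. \<forall>t0 R u Du. 0 < R \<and> sol I K A R t0 u Du \<longrightarrow>
     (AE z in lebesgue. z \<in> cylK I K (R/2) t0 \<longrightarrow>
        ereal \<bar>u z\<bar> \<le> ereal (C * (norm (xp I (fst z)) / R) powr lam) *
          esssup lebesgue (\<lambda>w. if w \<in> cylK I K (\<kappa> * R) t0 then ereal \<bar>u w\<bar> else 0)))"

definition lambda_c_kappa :: "'n set \<Rightarrow> (real^'n) set \<Rightarrow> (real \<Rightarrow> real^'n^'n) \<Rightarrow> real \<Rightarrow> ereal" where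
  "lambda_c_kappa I K A \<kappa> = Sup {ereal lam | lam. holds_est I K A \<kappa> lam}"

end

theory Submission
  imports Defs
begin

lemma leb_tr_meas: "(\<lambda>x. x + c) \<in> (lebesgue::'a::euclidean_space measure) \<rightarrow>\<^sub>M lebesgue"
  using lebesgue_affine_measurable[where c="\<lambda>_::'a. 1" and t=c]
  by (simp add: euclidean_representation add.commute)

lemma leb_tr_distr: "distr lebesgue lebesgue (\<lambda>x. x + c) = (lebesgue::'a::euclidean_space measure)"
  using lebesgue_affine_euclidean[where c="\<lambda>_::'a. 1" and t=c]
  by (simp add: euclidean_representation add.commute density_1)

lemma AE_tr:
  fixes c :: "'a::euclidean_space"
  assumes "AE x in lebesgue. P x" shows "AE x in lebesgue. P (x + c)"
proof -
  from assms obtain N where N: "{x\<in>space lebesgue. \<not> P x} \<subseteq> N" "emeasure lebesgue N = 0" "N \<in> sets lebesgue"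
    by (auto elim!: AE_E)
  have m: "(\<lambda>x. x + c) -` N \<in> sets lebesgue"
    using measurable_sets[OF leb_tr_meas N(3)] by simp
  have "emeasure lebesgue ((\<lambda>x. x + c) -` N) = emeasure (distr lebesgue lebesgue (\<lambda>x. x + c)) N"
    using emeasure_distr[OF leb_tr_meas N(3)] by simp
  also have "\<dots> = 0" using N(2) by (simp add: leb_tr_distr)
  finally show ?thesis
    using m N(1) by (intro AE_I[where N="(\<lambda>x. x + c) -` N"]) auto
qed

lemma meas_tr:
  fixes c :: "'a::euclidean_space"
  assumes "f \<in> borel_measurable lebesgue" shows "(\<lambda>x. f (x + c)) \<in> borel_measurable lebesgue"
  using measurable_compose[OF leb_tr_meas assms] by simp

lemma integrable_tr:
  fixes c :: "'a::euclidean_space" and f :: "'a \<Rightarrow> 'b::{banach, second_countable_topology}"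
  assumes "integrable lebesgue f"
  shows "integrable lebesgue (\<lambda>x. f (x + c))" "integral\<^sup>L lebesgue (\<lambda>x. f (x + c)) = integral\<^sup>L lebesgue f"
proof -
  have fm: "f \<in> borel_measurable lebesgue" using assms by auto
  show "integrable lebesgue (\<lambda>x. f (x + c))"
    using assms integrable_distr_eq[OF leb_tr_meas fm, of c] by (simp add: leb_tr_distr)
  show "integral\<^sup>L lebesgue (\<lambda>x. f (x + c)) = integral\<^sup>L lebesgue f"
    using integral_distr[OF leb_tr_meas fm, of c] by (simp add: leb_tr_distr)
qed

lemma integral_tr:
  fixes c :: "'a::euclidean_space" and f :: "'a \<Rightarrow> 'b::{banach, second_countable_topology}"
  shows "integral\<^sup>L lebesgue (\<lambda>x. f (x + c)) = integral\<^sup>L lebesgue f"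
proof (cases "integrable lebesgue f")
  case True then show ?thesis by (rule integrable_tr)
next
  case False
  have "\<not> integrable lebesgue (\<lambda>x. f (x + c))"
  proof
    assume "integrable lebesgue (\<lambda>x. f (x + c))"
    from integrable_tr(1)[OF this, of "-c"] False show False by simp
  qed
  with False show ?thesis by (simp add: not_integrable_integral_eq)
qed

lemma integrable_tr_iff:
  fixes c :: "'a::euclidean_space" and f :: "'a \<Rightarrow> 'b::{banach, second_countable_topology}"
  shows "integrable lebesgue (\<lambda>x. f (x + c)) \<longleftrightarrow> integrable lebesgue f"
  using integrable_tr(1)[of f c] integrable_tr(1)[of "\<lambda>x. f (x + c)" "-c"] by auto


lemma tr_image: "(+) (-c) ` S = {z. z + c \<in> S}" for c :: "'a::ab_group_add"
proof (rule set_eqI)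
  fix x show "x \<in> (+) (-c) ` S \<longleftrightarrow> x \<in> {z. z + c \<in> S}"
  proof
    assume "x \<in> (+) (-c) ` S" then obtain y where "y \<in> S" "x = -c + y" by auto
    then show "x \<in> {z. z + c \<in> S}" by simp
  next
    assume "x \<in> {z. z + c \<in> S}" then have "x + c \<in> S" by simp
    moreover have "x = -c + (x + c)" by simp
    ultimately show "x \<in> (+) (-c) ` S" by blast
  qed
qed

lemma test_tr:
  fixes c :: "(real^'n) \<times> real"
  assumes "test_fun U \<phi> g"
  shows "test_fun ((\<lambda>z. z + c) -` U) (\<lambda>z. \<phi> (z + c)) (\<lambda>z. g (z + c))"
proof -
  have d: "\<And>z. (\<phi> has_derivative (\<lambda>h. g z \<bullet> h)) (at z)" and cg: "continuous_on UNIV g"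
    and cp: "compact (closure {z. \<phi> z \<noteq> 0})" and sub: "closure {z. \<phi> z \<noteq> 0} \<subseteq> U"
    using assms by (auto simp: test_fun_def)
  have D: "((\<lambda>z. \<phi> (z + c)) has_derivative (\<lambda>h. g (z + c) \<bullet> h)) (at z)" for z
  proof -
    have "((\<lambda>z. z + c) has_derivative (\<lambda>h. h)) (at z)"
      by (auto intro!: derivative_eq_intros)
    from has_derivative_compose[OF this d[of "z + c"]] show ?thesis by (simp add: o_def)
  qed
  have C: "continuous_on UNIV (\<lambda>z. g (z + c))"
    by (rule continuous_on_compose2[OF cg]) (auto intro!: continuous_intros)
  have e: "{z. \<phi> (z + c) \<noteq> 0} = (+) (-c) ` {z. \<phi> z \<noteq> 0}"
    using tr_image[of c "{z. \<phi> z \<noteq> 0}"] by simp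
  have cl: "closure {z. \<phi> (z + c) \<noteq> 0} = (+) (-c) ` closure {z. \<phi> z \<noteq> 0}"
    unfolding e closure_translation ..
  have P: "compact (closure {z. \<phi> (z + c) \<noteq> 0})"
    unfolding cl by (rule compact_translation[OF cp])
  have S: "closure {z. \<phi> (z + c) \<noteq> 0} \<subseteq> (\<lambda>z. z + c) -` U"
  proof
    fix x assume "x \<in> closure {z. \<phi> (z + c) \<noteq> 0}"
    then obtain y where "y \<in> closure {z. \<phi> z \<noteq> 0}" "x = -c + y" unfolding cl by blast
    then show "x \<in> (\<lambda>z. z + c) -` U" using sub by auto
  qed
  show ?thesis unfolding test_fun_def using D C P S by (intro conjI allI) assumption+
qed

lemma test_grad_zero:
  assumes "test_fun U \<phi> g" "z \<notin> closure {z. \<phi> z \<noteq> 0}"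
  shows "g z = 0"
proof -
  have d: "(\<phi> has_derivative (\<lambda>h. g z \<bullet> h)) (at z)" using assms(1) unfolding test_fun_def by blast
  have "((\<lambda>_. 0::real) has_derivative (\<lambda>h. 0)) (at z)" by simp
  then have "(\<phi> has_derivative (\<lambda>h. 0)) (at z)"
  proof (rule has_derivative_transform_within_open[where s="- closure {z. \<phi> z \<noteq> 0}"])
    show "open (- closure {z. \<phi> z \<noteq> 0})" by (simp add: open_Compl)
    show "z \<in> - closure {z. \<phi> z \<noteq> 0}" by (rule Compl_iff[THEN iffD2, OF assms(2)])
    fix x assume "x \<in> - closure {z. \<phi> z \<noteq> 0}"
    then have "x \<notin> closure {z. \<phi> z \<noteq> 0}" by (rule ComplD)
    then have "x \<notin> {z. \<phi> z \<noteq> 0}" using closure_subset[of "{z. \<phi> z \<noteq> 0}"] by (rule contra_subsetD[rotated])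
    then show "0 = \<phi> x" by simp
  qed
  from has_derivative_unique[OF d this] have "(\<lambda>h. g z \<bullet> h) = (\<lambda>h. 0)" .
  then have "g z \<bullet> g z = 0" by (rule fun_cong)
  then show ?thesis by simp
qed

lemma test_phi_zero:
  assumes "z \<notin> closure {z. \<phi> z \<noteq> 0}"
  shows "\<phi> z = (0::real)"
  using assms closure_subset by (meson mem_Collect_eq subsetD)

lemma test_mono: "test_fun U \<phi> g \<Longrightarrow> U \<subseteq> V \<Longrightarrow> test_fun V \<phi> g"
  by (auto simp: test_fun_def)

lemma set_integral_support:
  fixes F :: "'a::euclidean_space \<Rightarrow> real"
  assumes "\<And>z. z \<notin> C \<Longrightarrow> F z = 0" "C \<subseteq> S1" "C \<subseteq> S2"
  shows "set_lebesgue_integral lebesgue S1 F = set_lebesgue_integral lebesgue S2 F"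
  unfolding set_lebesgue_integral_def
proof (rule arg_cong[where f="integral\<^sup>L lebesgue"], rule ext)
  fix x show "indicator S1 x *\<^sub>R F x = indicator S2 x *\<^sub>R F x"
    using assms by (cases "x \<in> C") (auto simp: indicator_def)
qed

lemma set_integral_tr:
  fixes c :: "'a::euclidean_space" and F :: "'a \<Rightarrow> real"
  shows "set_lebesgue_integral lebesgue ((\<lambda>z. z + c) -` S) (\<lambda>z. F (z + c)) = set_lebesgue_integral lebesgue S F"
  unfolding set_lebesgue_integral_def
  using integral_tr[of "\<lambda>z. indicator S z *\<^sub>R F z" c] by (simp add: indicator_def)

lemma set_integrable_tr:
  fixes c :: "'a::euclidean_space" and F :: "'a \<Rightarrow> 'b::{banach, second_countable_topology}"
  shows "set_integrable lebesgue ((\<lambda>z. z + c) -` S) (\<lambda>z. F (z + c)) = set_integrable lebesgue S F"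
  unfolding set_integrable_def
  using integrable_tr_iff[of "\<lambda>z. indicator S z *\<^sub>R F z" c] by (simp add: indicator_def)

lemma set_meas_tr:
  fixes c :: "'a::euclidean_space" and F :: "'a \<Rightarrow> 'b::{banach, second_countable_topology}"
  assumes "set_borel_measurable lebesgue S F"
  shows "set_borel_measurable lebesgue ((\<lambda>z. z + c) -` S) (\<lambda>z. F (z + c))"
  using meas_tr[OF assms[unfolded set_borel_measurable_def], of c]
  unfolding set_borel_measurable_def by (simp add: indicator_def)


lemma pair_plus_w: fixes w :: "'a::ab_group_add \<times> 'b::ab_group_add" shows "snd w = 0 \<Longrightarrow> (x, t) + w = (x + fst w, t)"
  by (cases w) simp

lemma slice_tr: fixes w :: "'a::ab_group_add \<times> 'b::ab_group_add" shows "snd w = 0 \<Longrightarrow> {x. (x, \<tau>) \<in> (\<lambda>z. z + w) -` Q} = (\<lambda>x. x + fst w) -` {x. (x, \<tau>) \<in> Q}"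
  by (auto simp: pair_plus_w)

lemma weak_grad_tr:
  fixes w :: "(real^'n) \<times> real"
  assumes "weak_grad Q u Du"
  shows "weak_grad ((\<lambda>z. z + w) -` Q) (\<lambda>z. u (z + w)) (\<lambda>z. Du (z + w))"
  unfolding weak_grad_def
proof (intro allI impI)
  fix \<phi> g i assume t: "test_fun (interior ((\<lambda>z. z + w) -` Q)) \<phi> g"
  have iQ: "interior ((\<lambda>z. z + w) -` Q) = (\<lambda>z. z + w) -` interior Q"
  proof -
    have "(\<lambda>z. z + w) -` Q = (+) (-w) ` Q" using tr_image[of w Q] by (simp add: vimage_def)
    moreover have "(\<lambda>z. z + w) -` interior Q = (+) (-w) ` interior Q" using tr_image[of w "interior Q"] by (simp add: vimage_def)
    ultimately show ?thesis by (simp add: interior_translation_subtract)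
  qed
  have t2: "test_fun (interior Q) (\<lambda>z. \<phi> (z + -w)) (\<lambda>z. g (z + -w))"
    using test_tr[OF t, of "-w"] unfolding iQ by (simp add: vimage_def)
  from assms[unfolded weak_grad_def, rule_format, OF t2, of i]
  have e: "set_lebesgue_integral lebesgue Q (\<lambda>z. u z * fst (g (z + - w)) $ i) =
      - set_lebesgue_integral lebesgue Q (\<lambda>z. Du z $ i * \<phi> (z + - w))" .
  have l: "set_lebesgue_integral lebesgue ((\<lambda>z. z + w) -` Q) (\<lambda>z. u (z + w) * fst (g z) $ i)
      = set_lebesgue_integral lebesgue Q (\<lambda>z. u z * fst (g (z + - w)) $ i)"
    using set_integral_tr[of w Q "\<lambda>z. u z * fst (g (z + - w)) $ i"] by simp
  have r: "set_lebesgue_integral lebesgue ((\<lambda>z. z + w) -` Q) (\<lambda>z. Du (z + w) $ i * \<phi> z)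
      = set_lebesgue_integral lebesgue Q (\<lambda>z. Du z $ i * \<phi> (z + - w))"
    using set_integral_tr[of w Q "\<lambda>z. Du z $ i * \<phi> (z + - w)"] by simp
  show "set_lebesgue_integral lebesgue ((\<lambda>z. z + w) -` Q) (\<lambda>z. u (z + w) * fst (g z) $ i) =
      - set_lebesgue_integral lebesgue ((\<lambda>z. z + w) -` Q) (\<lambda>z. Du (z + w) $ i * \<phi> z)"
    using e l r by simp
qed

lemma Vspace_tr:
  fixes w :: "(real^'n) \<times> real"
  assumes V: "Vspace Q u Du" and w: "snd w = 0"
  shows "Vspace ((\<lambda>z. z + w) -` Q) (\<lambda>z. u (z + w)) (\<lambda>z. Du (z + w))"
proof -
  from V have m1: "set_borel_measurable lebesgue Q u" and m2: "set_borel_measurable lebesgue Q Du"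
    and i3: "set_integrable lebesgue Q (\<lambda>z. (norm (Du z))\<^sup>2)"
    and wg: "weak_grad Q u Du"
    and ex: "\<exists>M. AE \<tau> in lborel. set_integrable lebesgue {x. (x,\<tau>) \<in> Q} (\<lambda>x. (u (x,\<tau>))\<^sup>2) \<and>
            set_lebesgue_integral lebesgue {x. (x,\<tau>) \<in> Q} (\<lambda>x. (u (x,\<tau>))\<^sup>2) \<le> M"
    unfolding Vspace_def by blast+
  from ex obtain M where M: "AE \<tau> in lborel. set_integrable lebesgue {x. (x,\<tau>) \<in> Q} (\<lambda>x. (u (x,\<tau>))\<^sup>2) \<and>
            set_lebesgue_integral lebesgue {x. (x,\<tau>) \<in> Q} (\<lambda>x. (u (x,\<tau>))\<^sup>2) \<le> M" by blast
  have "AE \<tau> in lborel. set_integrable lebesgue {x. (x,\<tau>) \<in> (\<lambda>z. z + w) -` Q} (\<lambda>x. (u ((x,\<tau>) + w))\<^sup>2) \<and>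
            set_lebesgue_integral lebesgue {x. (x,\<tau>) \<in> (\<lambda>z. z + w) -` Q} (\<lambda>x. (u ((x,\<tau>) + w))\<^sup>2) \<le> M"
    using M
  proof eventually_elim
    case (elim \<tau>)
    have f: "(\<lambda>x. (u ((x,\<tau>) + w))\<^sup>2) = (\<lambda>x. (u (x + fst w,\<tau>))\<^sup>2)"
      using w by (simp add: pair_plus_w)
    show ?case unfolding slice_tr[OF w] f
        set_integrable_tr[of "fst w" "{x. (x,\<tau>) \<in> Q}" "\<lambda>y. (u (y,\<tau>))\<^sup>2"]
        set_integral_tr[of "fst w" "{x. (x,\<tau>) \<in> Q}" "\<lambda>y. (u (y,\<tau>))\<^sup>2"]
      using elim by blast
  qed
  then have ex': "\<exists>M. AE \<tau> in lborel. set_integrable lebesgue {x. (x,\<tau>) \<in> (\<lambda>z. z + w) -` Q} (\<lambda>x. (u ((x,\<tau>) + w))\<^sup>2) \<and>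
            set_lebesgue_integral lebesgue {x. (x,\<tau>) \<in> (\<lambda>z. z + w) -` Q} (\<lambda>x. (u ((x,\<tau>) + w))\<^sup>2) \<le> M"
    by blast
  have i3': "set_integrable lebesgue ((\<lambda>z. z + w) -` Q) (\<lambda>z. (norm (Du (z + w)))\<^sup>2)"
    using i3 set_integrable_tr[of w Q "\<lambda>z. (norm (Du z))\<^sup>2"] by simp
  show ?thesis unfolding Vspace_def
    using set_meas_tr[OF m1, of w] set_meas_tr[OF m2, of w] i3' ex' weak_grad_tr[OF wg, of w]
    by blast
qed


lemma weak_grad_mono:
  assumes "weak_grad Q u Du" "Q' \<subseteq> Q"
  shows "weak_grad Q' u Du"
  unfolding weak_grad_def
proof (intro allI impI)
  fix \<phi> g i assume t: "test_fun (interior Q') \<phi> g"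
  have t2: "test_fun (interior Q) \<phi> g" using t interior_mono[OF assms(2)] by (rule test_mono)
  have C: "closure {z. \<phi> z \<noteq> 0} \<subseteq> Q'" using t interior_subset unfolding test_fun_def by blast
  have e: "set_lebesgue_integral lebesgue Q (\<lambda>z. u z * fst (g z) $ i) =
      - set_lebesgue_integral lebesgue Q (\<lambda>z. Du z $ i * \<phi> z)"
    using assms(1)[unfolded weak_grad_def, rule_format, OF t2] by blast
  have l: "set_lebesgue_integral lebesgue Q' (\<lambda>z. u z * fst (g z) $ i) = set_lebesgue_integral lebesgue Q (\<lambda>z. u z * fst (g z) $ i)"
    by (rule set_integral_support[where C="closure {z. \<phi> z \<noteq> 0}"])
       (use C assms(2) test_grad_zero[OF t] in auto)
  have r: "set_lebesgue_integral lebesgue Q' (\<lambda>z. Du z $ i * \<phi> z) = set_lebesgue_integral lebesgue Q (\<lambda>z. Du z $ i * \<phi> z)"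
    by (rule set_integral_support[where C="closure {z. \<phi> z \<noteq> 0}"])
       (use C assms(2) test_phi_zero in auto)
  show "set_lebesgue_integral lebesgue Q' (\<lambda>z. u z * fst (g z) $ i) =
      - set_lebesgue_integral lebesgue Q' (\<lambda>z. Du z $ i * \<phi> z)"
    using e l r by simp
qed

lemma Vspace_mono:
  assumes V: "Vspace Q u Du" and sub: "Q' \<subseteq> Q" and mQ: "Q' \<in> sets lebesgue"
    and msl: "\<And>\<tau>. {x. (x,\<tau>) \<in> Q'} \<in> sets lebesgue"
  shows "Vspace Q' u Du"
proof -
  from V have m1: "set_borel_measurable lebesgue Q u" and m2: "set_borel_measurable lebesgue Q Du"
    and i3: "set_integrable lebesgue Q (\<lambda>z. (norm (Du z))\<^sup>2)"
    and wg: "weak_grad Q u Du"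
    and ex: "\<exists>M. AE \<tau> in lborel. set_integrable lebesgue {x. (x,\<tau>) \<in> Q} (\<lambda>x. (u (x,\<tau>))\<^sup>2) \<and>
            set_lebesgue_integral lebesgue {x. (x,\<tau>) \<in> Q} (\<lambda>x. (u (x,\<tau>))\<^sup>2) \<le> M"
    unfolding Vspace_def by blast+
  from ex obtain M where M: "AE \<tau> in lborel. set_integrable lebesgue {x. (x,\<tau>) \<in> Q} (\<lambda>x. (u (x,\<tau>))\<^sup>2) \<and>
            set_lebesgue_integral lebesgue {x. (x,\<tau>) \<in> Q} (\<lambda>x. (u (x,\<tau>))\<^sup>2) \<le> M" by blast
  have "AE \<tau> in lborel. set_integrable lebesgue {x. (x,\<tau>) \<in> Q'} (\<lambda>x. (u (x,\<tau>))\<^sup>2) \<and>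
            set_lebesgue_integral lebesgue {x. (x,\<tau>) \<in> Q'} (\<lambda>x. (u (x,\<tau>))\<^sup>2) \<le> M"
    using M
  proof eventually_elim
    case (elim \<tau>)
    have ss: "{x. (x,\<tau>) \<in> Q'} \<subseteq> {x. (x,\<tau>) \<in> Q}" using sub by auto
    have i1: "set_integrable lebesgue {x. (x,\<tau>) \<in> Q'} (\<lambda>x. (u (x,\<tau>))\<^sup>2)"
      using set_integrable_subset[OF conjunct1[OF elim] msl ss] .
    have "set_lebesgue_integral lebesgue {x. (x,\<tau>) \<in> Q'} (\<lambda>x. (u (x,\<tau>))\<^sup>2)
        \<le> set_lebesgue_integral lebesgue {x. (x,\<tau>) \<in> Q} (\<lambda>x. (u (x,\<tau>))\<^sup>2)"
      unfolding set_lebesgue_integral_def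
      using i1 conjunct1[OF elim] ss unfolding set_integrable_def
      by (intro integral_mono) (auto simp: indicator_def)
    then show ?case using i1 elim by simp
  qed
  then have ex': "\<exists>M. AE \<tau> in lborel. set_integrable lebesgue {x. (x,\<tau>) \<in> Q'} (\<lambda>x. (u (x,\<tau>))\<^sup>2) \<and>
            set_lebesgue_integral lebesgue {x. (x,\<tau>) \<in> Q'} (\<lambda>x. (u (x,\<tau>))\<^sup>2) \<le> M"
    by blast
  show ?thesis unfolding Vspace_def
    using set_borel_measurable_subset[OF m1 mQ sub] set_borel_measurable_subset[OF m2 mQ sub]
      set_integrable_subset[OF i3 mQ sub] ex' weak_grad_mono[OF wg sub]
    by blast
qed


lemma xp_add: "xp I (x + y) = xp I x + xp I y" by (simp add: xp_def vec_eq_iff)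
lemma xp_diff: "xp I (x - y) = xp I x - xp I y" by (simp add: xp_def vec_eq_iff)
lemma xpp_diff: "xpp I (x - y) = xpp I x - xpp I y" by (simp add: xpp_def vec_eq_iff)
lemma xpp_add: "xpp I (x + y) = xpp I x + xpp I y" by (simp add: xpp_def vec_eq_iff)
lemma xp_xpp: "xp I (xpp I x) = 0" by (simp add: xp_def xpp_def vec_eq_iff)
lemma xpp_xpp: "xpp I (xpp I x) = xpp I x" by (simp add: xpp_def vec_eq_iff)
lemma xp_subsp: "xp I x \<in> subsp I" by (simp add: xp_def subsp_def)

lemma cont_xp: "continuous_on S (xp I)"
  unfolding xp_def
proof (intro continuous_intros)
  fix i show "continuous_on S (\<lambda>x::real^'a. if i \<in> I then x $ i else 0)"
    by (cases "i \<in> I") (simp_all add: continuous_on_component continuous_on_id)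
qed
lemma cont_xpp: "continuous_on S (xpp I)"
  unfolding xpp_def
proof (intro continuous_intros)
  fix i show "continuous_on S (\<lambda>x::real^'a. if i \<in> I then 0 else x $ i)"
    by (cases "i \<in> I") (simp_all add: continuous_on_component continuous_on_id)
qed

lemma borel_leb: "A \<in> sets borel \<Longrightarrow> A \<in> sets lebesgue"
  by (simp add: sets_completionI_sets)

lemma slice_borel:
  fixes S :: "('a::topological_space \<times> 'b::topological_space) set"
  assumes "S \<in> sets borel" shows "{x. (x,\<tau>) \<in> S} \<in> sets borel"
proof -
  have "(\<lambda>x. (x,\<tau>)) \<in> borel_measurable borel"
    by (intro borel_measurable_continuous_onI continuous_intros)
  from measurable_sets[OF this assms] show ?thesis by (simp add: vimage_def)
qed

lemma cone_open_pre:
  assumes "open_cone I K"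
  obtains U where "open U" "\<And>x. xp I x \<in> K \<longleftrightarrow> xp I x \<in> U"
proof -
  from assms have "openin (top_of_set (subsp I)) K" by (simp add: open_cone_def)
  then obtain U where "open U" "K = subsp I \<inter> U" by (auto simp: openin_open)
  then show ?thesis using that xp_subsp by blast
qed

lemma cylK_borel:
  assumes "open_cone I K"
  shows "cylK I K R t0 \<in> sets borel"
proof -
  obtain U where U: "open U" "\<And>x. xp I x \<in> K \<longleftrightarrow> xp I x \<in> U" using cone_open_pre[OF assms] by blast
  have c1: "continuous_on UNIV (\<lambda>z::(real^'a) \<times> real. xp I (fst z))"
    by (rule continuous_on_compose2[OF cont_xp]) (auto intro: continuous_intros)
  have c2: "continuous_on UNIV (\<lambda>z::(real^'a) \<times> real. xpp I (fst z))"
    by (rule continuous_on_compose2[OF cont_xpp]) (auto intro: continuous_intros)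
  have o1: "open {z::(real^'a) \<times> real. xp I (fst z) \<in> U}"
    using open_vimage[OF U(1) c1] by (simp add: vimage_def)
  have o2: "open {z::(real^'a) \<times> real. norm (xp I (fst z)) < R}"
    by (rule open_Collect_less) (auto intro: continuous_intros continuous_on_compose2[OF continuous_on_norm_id c1])
  have o3: "open {z::(real^'a) \<times> real. norm (xpp I (fst z)) < R}"
    by (rule open_Collect_less) (auto intro: continuous_intros continuous_on_compose2[OF continuous_on_norm_id c2])
  have o4: "open {z::(real^'a) \<times> real. t0 - R\<^sup>2 < snd z}"
    by (rule open_Collect_less) (auto intro: continuous_intros)
  have c5: "closed {z::(real^'a) \<times> real. snd z \<le> t0}"
    by (rule closed_Collect_le) (auto intro: continuous_intros)
  have "cylK I K R t0 = {z. xp I (fst z) \<in> U} \<inter> {z. norm (xp I (fst z)) < R} \<inter>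
      {z. norm (xpp I (fst z)) < R} \<inter> {z. t0 - R\<^sup>2 < snd z} \<inter> {z. snd z \<le> t0}"
    by (auto simp: cylK_def U(2))
  also have "\<dots> \<in> sets borel"
    using o1 o2 o3 o4 c5 by (intro sets.Int borel_open borel_closed) auto
  finally show ?thesis .
qed

lemma cylF_borel:
  shows "cylF I R t0 \<in> sets borel"
proof -
  have c1: "continuous_on UNIV (\<lambda>z::(real^'a) \<times> real. xp I (fst z))"
    by (rule continuous_on_compose2[OF cont_xp]) (auto intro: continuous_intros)
  have c2: "continuous_on UNIV (\<lambda>z::(real^'a) \<times> real. xpp I (fst z))"
    by (rule continuous_on_compose2[OF cont_xpp]) (auto intro: continuous_intros)
  have o2: "open {z::(real^'a) \<times> real. norm (xp I (fst z)) < R}"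
    by (rule open_Collect_less) (auto intro: continuous_intros continuous_on_compose2[OF continuous_on_norm_id c1])
  have o3: "open {z::(real^'a) \<times> real. norm (xpp I (fst z)) < R}"
    by (rule open_Collect_less) (auto intro: continuous_intros continuous_on_compose2[OF continuous_on_norm_id c2])
  have o4: "open {z::(real^'a) \<times> real. t0 - R\<^sup>2 < snd z}"
    by (rule open_Collect_less) (auto intro: continuous_intros)
  have c5: "closed {z::(real^'a) \<times> real. snd z \<le> t0}"
    by (rule closed_Collect_le) (auto intro: continuous_intros)
  have "cylF I R t0 = {z. norm (xp I (fst z)) < R} \<inter>
      {z. norm (xpp I (fst z)) < R} \<inter> {z. t0 - R\<^sup>2 < snd z} \<inter> {z. snd z \<le> t0}"
    by (auto simp: cylF_def)
  also have "\<dots> \<in> sets borel"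
    using o2 o3 o4 c5 by (intro sets.Int borel_open borel_closed) auto
  finally show ?thesis .
qed


lemma cylK_mono: "\<rho>' \<le> \<rho> \<Longrightarrow> 0 \<le> \<rho>' \<Longrightarrow> cylK I K \<rho>' s \<subseteq> cylK I K \<rho> s"
proof -
  assume a: "\<rho>' \<le> \<rho>" "0 \<le> \<rho>'"
  then have sq: "\<rho>'\<^sup>2 \<le> \<rho>\<^sup>2" by (intro power_mono) auto
  from a show ?thesis by (auto simp: cylK_def) (use sq in linarith)+
qed

lemma cylF_mono: "\<rho>' \<le> \<rho> \<Longrightarrow> 0 \<le> \<rho>' \<Longrightarrow> cylF I \<rho>' s \<subseteq> cylF I \<rho> s"
proof -
  assume a: "\<rho>' \<le> \<rho>" "0 \<le> \<rho>'"
  then have sq: "\<rho>'\<^sup>2 \<le> \<rho>\<^sup>2" by (intro power_mono) auto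
  from a show ?thesis by (auto simp: cylF_def) (use sq in linarith)+
qed

lemma cylK_leb: "open_cone I K \<Longrightarrow> cylK I K R t0 \<in> sets lebesgue"
  by (rule borel_leb[OF cylK_borel])
lemma cylK_slice_leb: "open_cone I K \<Longrightarrow> {x. (x,\<tau>) \<in> cylK I K R t0} \<in> sets lebesgue"
  by (rule borel_leb[OF slice_borel[OF cylK_borel]])
lemma cylF_leb: "cylF I R t0 \<in> sets lebesgue"
  by (rule borel_leb[OF cylF_borel])
lemma cylF_slice_leb: "{x. (x,\<tau>) \<in> cylF I R t0} \<in> sets lebesgue"
  by (rule borel_leb[OF slice_borel[OF cylF_borel]])


lemma sol_tr:
  fixes y :: "real^'n"
  assumes S: "sol I K A R t0 u Du" and cone: "open_cone I K"
    and y: "xp I y = 0" and R': "0 < R'" "R' < R"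
    and incK: "\<And>z. z \<in> cylK I K \<rho> s \<Longrightarrow> z + (y,0) \<in> cylK I K R' t0"
    and incF: "\<And>z. z \<in> cylF I \<rho> s \<Longrightarrow> z + (y,0) \<in> cylF I R' t0"
  shows "sol I K A \<rho> s (\<lambda>z. u (z + (y,0))) (\<lambda>z. Du (z + (y,0)))"
proof -
  define w :: "(real^'n) \<times> real" where "w = (y, 0)"
  have sw: "snd w = 0" by (simp add: w_def)
  have xpw: "xp I (fst (z + w)) = xp I (fst z)" for z
    by (simp add: w_def xp_add y)
  from S have V1: "Vspace (cylK I K R' t0) u Du"
    and V2: "Vspace (cylF I R' t0) (\<lambda>z. if xp I (fst z) \<in> K then u z else 0)
                              (\<lambda>z. if xp I (fst z) \<in> K then Du z else 0)"
    and W: "\<And>\<phi> g. test_fun (interior (cylK I K R t0)) \<phi> g \<Longrightarrow>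
        set_lebesgue_integral lebesgue (cylK I K R t0)
          (\<lambda>z. - u z * snd (g z) + (A (snd z) *v Du z) \<bullet> fst (g z)) = 0"
    using R' unfolding sol_def by blast+
  have part1: "Vspace (cylK I K \<rho>' s) (\<lambda>z. u (z + w)) (\<lambda>z. Du (z + w)) \<and>
        Vspace (cylF I \<rho>' s) (\<lambda>z. if xp I (fst z) \<in> K then u (z + w) else 0)
                              (\<lambda>z. if xp I (fst z) \<in> K then Du (z + w) else 0)"
    if r: "0 < \<rho>'" "\<rho>' < \<rho>" for \<rho>'
  proof
    have T1: "Vspace ((\<lambda>z. z + w) -` cylK I K R' t0) (\<lambda>z. u (z + w)) (\<lambda>z. Du (z + w))"
      by (rule Vspace_tr[OF V1 sw])
    show "Vspace (cylK I K \<rho>' s) (\<lambda>z. u (z + w)) (\<lambda>z. Du (z + w))"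
    proof (rule Vspace_mono[OF T1])
      show "cylK I K \<rho>' s \<subseteq> (\<lambda>z. z + w) -` cylK I K R' t0"
        using cylK_mono[of \<rho>' \<rho>] r incK unfolding w_def by fastforce
    qed (auto intro: cylK_leb cylK_slice_leb cone)
    have T2: "Vspace ((\<lambda>z. z + w) -` cylF I R' t0) (\<lambda>z. if xp I (fst (z + w)) \<in> K then u (z + w) else 0)
                              (\<lambda>z. if xp I (fst (z + w)) \<in> K then Du (z + w) else 0)"
      using Vspace_tr[OF V2 sw] by simp
    show "Vspace (cylF I \<rho>' s) (\<lambda>z. if xp I (fst z) \<in> K then u (z + w) else 0)
                              (\<lambda>z. if xp I (fst z) \<in> K then Du (z + w) else 0)"
    proof (rule Vspace_mono[OF T2[unfolded xpw]])
      show "cylF I \<rho>' s \<subseteq> (\<lambda>z. z + w) -` cylF I R' t0"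
        using cylF_mono[of \<rho>' \<rho>] r incF unfolding w_def by fastforce
    qed (auto intro: cylF_leb cylF_slice_leb)
  qed
  have part2: "set_lebesgue_integral lebesgue (cylK I K \<rho> s)
          (\<lambda>z. - u (z + w) * snd (g z) + (A (snd z) *v Du (z + w)) \<bullet> fst (g z)) = 0"
    if t: "test_fun (interior (cylK I K \<rho> s)) \<phi> g" for \<phi> g
  proof -
    let ?C = "cylK I K \<rho> s"
    have t1: "test_fun ((\<lambda>z. z + -w) -` interior ?C) (\<lambda>z. \<phi> (z + -w)) (\<lambda>z. g (z + -w))"
      by (rule test_tr[OF t])
    have img: "(\<lambda>z. z + -w) -` X = (+) w ` X" for X
      using tr_image[of "-w" X] by (simp add: vimage_def)
    have sub1: "(+) w ` ?C \<subseteq> cylK I K R t0"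
    proof
      fix x assume "x \<in> (+) w ` ?C"
      then obtain z where "z \<in> ?C" "x = w + z" by blast
      then show "x \<in> cylK I K R t0"
        using incK[of z] cylK_mono[of R' R] R' unfolding w_def by (auto simp: add.commute)
    qed
    have "(\<lambda>z. z + -w) -` interior ?C \<subseteq> interior (cylK I K R t0)"
      unfolding img interior_translation[symmetric] by (rule interior_mono[OF sub1])
    then have t2: "test_fun (interior (cylK I K R t0)) (\<lambda>z. \<phi> (z + -w)) (\<lambda>z. g (z + -w))"
      by (rule test_mono[OF t1])
    have e: "set_lebesgue_integral lebesgue (cylK I K R t0)
          (\<lambda>z. - u z * snd (g (z + -w)) + (A (snd z) *v Du z) \<bullet> fst (g (z + -w))) = 0"
      using W[OF t2] .
    have clsub: "closure {z. \<phi> (z + -w) \<noteq> 0} \<subseteq> (\<lambda>z. z + -w) -` ?C"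
      using t1 interior_subset[of ?C] unfolding test_fun_def by blast
    have "set_lebesgue_integral lebesgue (cylK I K R t0)
          (\<lambda>z. - u z * snd (g (z + -w)) + (A (snd z) *v Du z) \<bullet> fst (g (z + -w)))
        = set_lebesgue_integral lebesgue ((\<lambda>z. z + -w) -` ?C)
          (\<lambda>z. - u z * snd (g (z + -w)) + (A (snd z) *v Du z) \<bullet> fst (g (z + -w)))"
    proof (rule set_integral_support[where C="closure {z. \<phi> (z + -w) \<noteq> 0}"])
      fix z assume "z \<notin> closure {z. \<phi> (z + -w) \<noteq> 0}"
      from test_grad_zero[OF t1 this] show "- u z * snd (g (z + -w)) + (A (snd z) *v Du z) \<bullet> fst (g (z + -w)) = 0"
        by simp
    next
      show "closure {z. \<phi> (z + -w) \<noteq> 0} \<subseteq> cylK I K R t0"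
        using clsub sub1 img by blast
    qed (rule clsub)
    also have "\<dots> = set_lebesgue_integral lebesgue ?C
          (\<lambda>z. - u (z + w) * snd (g z) + (A (snd z) *v Du (z + w)) \<bullet> fst (g z))"
      using set_integral_tr[of "-w" ?C "\<lambda>z. - u (z + w) * snd (g z) + (A (snd z) *v Du (z + w)) \<bullet> fst (g z)"] sw
      by simp
    finally show ?thesis using e by simp
  qed
  show ?thesis unfolding sol_def w_def[symmetric]
    using part1 part2 by blast
qed


lemma esssup_nonneg:
  fixes f :: "(real^'n) \<times> real \<Rightarrow> ereal"
  assumes "\<And>x. 0 \<le> f x" shows "0 \<le> esssup lebesgue f"
proof -
  have "emeasure lebesgue (space lebesgue :: ((real^'n) \<times> real) set) \<noteq> 0"
    by (simp add: emeasure_completion)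
  then have "esssup lebesgue (\<lambda>x::(real^'n) \<times> real. 0::ereal) = 0" by (rule esssup_const)
  moreover have "esssup lebesgue (\<lambda>x::(real^'n) \<times> real. 0::ereal) \<le> esssup lebesgue f"
    by (rule esssup_mono) (use assms in auto)
  ultimately show ?thesis by simp
qed

lemma null_top: "{z::(real^'n) \<times> real. snd z = t0} \<in> null_sets lebesgue"
proof -
  have "{z::(real^'n) \<times> real. snd z = t0} = {z. (0, 1) \<bullet> z = t0}"
    by (auto simp: inner_prod_def)
  moreover have "negligible {z::(real^'n) \<times> real. (0, 1) \<bullet> z = t0}"
    by (rule negligible_hyperplane) (simp add: zero_prod_def)
  ultimately show ?thesis by (simp add: negligible_iff_null_sets)
qed


lemma est_transfer:
  fixes I :: "'n::finite set"
  assumes H: "holds_est I K A \<kappa>2 lam" and cone: "open_cone I K"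
    and k1: "1/2 < \<kappa>1" "\<kappa>1 < 1" and k2: "0 < \<kappa>2" "\<kappa>2 < 1"
  shows "holds_est I K A \<kappa>1 lam"
proof -
  from H obtain C where HC: "\<And>t0 R u Du. 0 < R \<Longrightarrow> sol I K A R t0 u Du \<Longrightarrow>
     (AE z in lebesgue. z \<in> cylK I K (R/2) t0 \<longrightarrow>
        ereal \<bar>u z\<bar> \<le> ereal (C * (norm (xp I (fst z)) / R) powr lam) *
          esssup lebesgue (\<lambda>w. if w \<in> cylK I K (\<kappa>2 * R) t0 then ereal \<bar>u w\<bar> else 0))"
    unfolding holds_est_def by blast
  define c where "c = (\<kappa>1 - 1/2)/2"
  define m where "m = min ((c/2) powr lam) ((1/2) powr lam)"
  define Cp where "Cp = max C 0"
  define C' where "C' = max (Cp * c powr (-lam)) (1/m)"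
  have c0: "0 < c" using k1 by (simp add: c_def)
  have c1: "3/2*c \<le> \<kappa>1 - 1/2" using k1 by (simp add: c_def)
  have c2: "c^2 \<le> \<kappa>1^2 - 1/4"
  proof -
    have "c^2 = (\<kappa>1 - 1/2) * ((\<kappa>1 - 1/2)/4)" by (simp add: c_def power2_eq_square)
    also have "\<dots> \<le> (\<kappa>1 - 1/2) * (\<kappa>1 + 1/2)" using k1 by (intro mult_left_mono) auto
    also have "\<dots> = \<kappa>1^2 - 1/4" by (simp add: power2_eq_square algebra_simps)
    finally show ?thesis .
  qed
  have mpos: "0 < m" using c0 by (simp add: m_def)
  have Cp0: "0 \<le> Cp" by (simp add: Cp_def)
  obtain D :: "((real^'n) \<times> real) set" where D: "countable D" "\<And>X. open X \<Longrightarrow> X \<noteq> {} \<Longrightarrow> \<exists>d\<in>D. d \<in> X"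
    using countable_dense_exists by blast
  show ?thesis unfolding holds_est_def
  proof (intro exI[of _ C'] allI impI)
    fix t0 R u Du assume RS: "0 < R \<and> sol I K A R t0 u Du"
    then have R: "0 < R" and S: "sol I K A R t0 u Du" by auto
    define \<rho> where "\<rho> = c * R"
    have \<rho>0: "0 < \<rho>" using c0 R by (simp add: \<rho>_def)
    define f1 where "f1 = (\<lambda>w. if w \<in> cylK I K (\<kappa>1 * R) t0 then ereal \<bar>u w\<bar> else 0)"
    define E where "E = esssup lebesgue f1"
    have f1nn: "0 \<le> f1 w" for w by (simp add: f1_def)
    have E0: "0 \<le> E" unfolding E_def by (rule esssup_nonneg[OF f1nn])
    define good where "good d \<longleftrightarrow> norm (xpp I (fst d)) + \<rho> \<le> \<kappa>1 * R \<and> snd d \<le> t0 \<and> t0 - (\<kappa>1*R)^2 \<le> snd d - \<rho>^2" for d :: "(real^'n) \<times> real"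
    define P where "P d z \<longleftrightarrow> (z + - (xpp I (fst d), 0) \<in> cylK I K (\<rho>/2) (snd d) \<longrightarrow>
        ereal \<bar>u z\<bar> \<le> ereal (Cp * (norm (xp I (fst z)) / \<rho>) powr lam) * E)" for d z
    have key: "AE z in lebesgue. P d z" if gd: "good d" for d
    proof -
      define y where "y = xpp I (fst d)"
      define s where "s = snd d"
      define w :: "(real^'n) \<times> real" where "w = (y, 0)"
      have y: "xp I y = 0" "xpp I y = y" using xp_xpp xpp_xpp y_def by auto
      have gy: "norm y + \<rho> \<le> \<kappa>1 * R" "s \<le> t0" "t0 - (\<kappa>1*R)^2 \<le> s - \<rho>^2"
        using gd by (auto simp: good_def y_def s_def)
      have incF: "z + (y,0) \<in> cylF I (\<kappa>1*R) t0" if "z \<in> cylF I \<rho> s" for z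
      proof -
        obtain x t where z: "z = (x,t)" by (cases z)
        have h: "norm (xp I x) < \<rho>" "norm (xpp I x) < \<rho>" "s - \<rho>^2 < t" "t \<le> s"
          using that by (auto simp: cylF_def z)
        have "norm (xpp I (x + y)) \<le> norm (xpp I x) + norm y"
          by (simp add: xpp_add y norm_triangle_ineq)
        moreover have "norm (xp I x) < \<kappa>1 * R" using h(1) gy(1) norm_ge_zero[of y] by linarith
        ultimately show ?thesis using h gy \<rho>0 by (auto simp: cylF_def z xp_add y)
      qed
      have incK: "z + (y,0) \<in> cylK I K (\<kappa>1*R) t0" if "z \<in> cylK I K \<rho> s" for z
      proof -
        obtain x t where z: "z = (x,t)" by (cases z)
        have "z \<in> cylF I \<rho> s" "xp I x \<in> K" using that by (auto simp: cylF_def cylK_def z)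
        from incF[OF this(1)] this(2) show ?thesis by (auto simp: cylF_def cylK_def z xp_add y)
      qed
      have Sv: "sol I K A \<rho> s (\<lambda>z. u (z + (y,0))) (\<lambda>z. Du (z + (y,0)))"
        by (rule sol_tr[OF S cone y(1) _ _ incK incF]) (use k1 R in auto)
      define Ev where "Ev = esssup lebesgue (\<lambda>w'. if w' \<in> cylK I K (\<kappa>2 * \<rho>) s then ereal \<bar>u (w' + (y,0))\<bar> else 0)"
      have A1: "AE z in lebesgue. z \<in> cylK I K (\<rho>/2) s \<longrightarrow>
          ereal \<bar>u (z + (y,0))\<bar> \<le> ereal (C * (norm (xp I (fst z)) / \<rho>) powr lam) * Ev"
        using HC[OF \<rho>0 Sv] unfolding Ev_def by simp
      have Ev0: "0 \<le> Ev" unfolding Ev_def by (rule esssup_nonneg) auto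
      have EvE: "Ev \<le> E"
      proof -
        let ?S = "cylK I K (\<kappa>2 * \<rho>) s"
        have V: "Vspace ?S (\<lambda>z. u (z + (y,0))) (\<lambda>z. Du (z + (y,0)))"
          using Sv k2 \<rho>0 unfolding sol_def by auto
        then have hm: "(\<lambda>x. indicator ?S x *\<^sub>R u (x + (y,0))) \<in> borel_measurable lebesgue"
          unfolding Vspace_def set_borel_measurable_def by blast
        have eq: "(\<lambda>w'. if w' \<in> ?S then ereal \<bar>u (w' + (y,0))\<bar> else 0) =
            (\<lambda>x. ereal \<bar>indicator ?S x *\<^sub>R u (x + (y,0))\<bar>)"
          by (auto simp: indicator_def)
        have gm: "(\<lambda>w'. if w' \<in> ?S then ereal \<bar>u (w' + (y,0))\<bar> else 0) \<in> borel_measurable lebesgue"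
          unfolding eq using hm by measurable
        have AEf: "AE x in lebesgue. f1 (x + w) \<le> E"
          by (rule AE_tr) (simp add: E_def esssup_AE)
        have "AE x in lebesgue. (if x \<in> ?S then ereal \<bar>u (x + (y,0))\<bar> else 0) \<le> E"
          using AEf
        proof eventually_elim
          case (elim x)
          show ?case
          proof (cases "x \<in> ?S")
            case True
            then have "x \<in> cylK I K \<rho> s" using cylK_mono[of "\<kappa>2 * \<rho>" \<rho> I K s] k2 \<rho>0 by auto
            from incK[OF this] have "f1 (x + w) = ereal \<bar>u (x + (y,0))\<bar>" by (simp add: f1_def w_def)
            with True elim show ?thesis by simp
          next
            case False then show ?thesis using E0 by simp
          qed
        qed
        then show ?thesis unfolding Ev_def by (rule esssup_I[OF gm])
      qed
      have A2: "AE z in lebesgue. (z + - w) \<in> cylK I K (\<rho>/2) s \<longrightarrow>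
          ereal \<bar>u (z + - w + (y,0))\<bar> \<le> ereal (C * (norm (xp I (fst (z + - w))) / \<rho>) powr lam) * Ev"
        by (rule AE_tr[OF A1])
      show ?thesis using A2
      proof eventually_elim
        case (elim z)
        have e1: "z + - w + (y,0) = z" by (simp add: w_def zero_prod_def)
        have e2: "xp I (fst (z + - w)) = xp I (fst z)" by (simp add: w_def xp_diff y)
        have "ereal (C * (norm (xp I (fst z)) / \<rho>) powr lam) * Ev \<le> ereal (Cp * (norm (xp I (fst z)) / \<rho>) powr lam) * Ev"
          by (rule ereal_mult_right_mono[OF _ Ev0]) (auto simp: Cp_def intro!: mult_right_mono)
        also have "\<dots> \<le> ereal (Cp * (norm (xp I (fst z)) / \<rho>) powr lam) * E"
          by (rule ereal_mult_left_mono[OF EvE]) (simp add: Cp0)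
        finally have fin: "ereal (C * (norm (xp I (fst z)) / \<rho>) powr lam) * Ev \<le> ereal (Cp * (norm (xp I (fst z)) / \<rho>) powr lam) * E" .
        have el: "z + - w \<in> cylK I K (\<rho>/2) s \<longrightarrow> ereal \<bar>u z\<bar> \<le> ereal (C * (norm (xp I (fst z)) / \<rho>) powr lam) * Ev"
          using elim unfolding e1 e2 .
        have Pw: "P d z \<longleftrightarrow> (z + - w \<in> cylK I K (\<rho>/2) s \<longrightarrow>
            ereal \<bar>u z\<bar> \<le> ereal (Cp * (norm (xp I (fst z)) / \<rho>) powr lam) * E)"
          unfolding P_def w_def y_def s_def by simp
        show ?case unfolding Pw using el fin by (blast intro: order.trans)
      qed
    qed
    have AEa: "AE z::(real^'n) \<times> real in lebesgue. snd z \<noteq> t0"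
      using AE_not_in[OF null_top[of t0]] by simp
    have AEb: "AE z in lebesgue. f1 z \<le> E" unfolding E_def by (rule esssup_AE)
    have AEc: "AE z in lebesgue. \<forall>d\<in>{d\<in>D. good d}. P d z"
      using D(1) key by (subst AE_ball_countable) auto
    show "AE z in lebesgue. z \<in> cylK I K (R/2) t0 \<longrightarrow>
        ereal \<bar>u z\<bar> \<le> ereal (C' * (norm (xp I (fst z)) / R) powr lam) *
          esssup lebesgue (\<lambda>w. if w \<in> cylK I K (\<kappa>1 * R) t0 then ereal \<bar>u w\<bar> else 0)"
      unfolding f1_def[symmetric] E_def[symmetric]
      using AEa AEb AEc
    proof eventually_elim
      case (elim z)
      show ?case
      proof
        assume zin: "z \<in> cylK I K (R/2) t0"
        obtain x t where zxt: "z = (x,t)" by (cases z)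
        have h: "xp I x \<in> K" "norm (xp I x) < R/2" "norm (xpp I x) < R/2" "t0 - (R/2)^2 < t" "t \<le> t0"
          using zin by (auto simp: cylK_def zxt)
        have tt: "t < t0" using elim(1) h(5) zxt by auto
        define p where "p = norm (xp I x)"
        have p0: "0 \<le> p" by (simp add: p_def)
        have zK1: "z \<in> cylK I K (\<kappa>1*R) t0" using cylK_mono[of "R/2" "\<kappa>1*R" I K t0] zin k1 R by auto
        then have uE: "ereal \<bar>u z\<bar> \<le> E" using elim(2) by (simp add: f1_def)
        have fz: "norm (xp I (fst z)) = p" by (simp add: zxt p_def)
        show "ereal \<bar>u z\<bar> \<le> ereal (C' * (norm (xp I (fst z)) / R) powr lam) * E"
        proof (cases "\<rho>/2 \<le> p")
          case True
          have pr1: "c/2 \<le> p/R" using True R by (simp add: \<rho>_def field_simps)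
          have pr2: "p/R \<le> 1/2" using h(2) R by (simp add: p_def field_simps)
          have pRpos: "0 < p/R" using pr1 c0 by linarith
          have pm: "m \<le> (p/R) powr lam"
          proof (cases "0 \<le> lam")
            case True
            have "(c/2) powr lam \<le> (p/R) powr lam" by (rule powr_mono2[OF True _ pr1]) (use c0 in simp)
            then show ?thesis by (simp add: m_def)
          next
            case False
            have "(1/2) powr lam \<le> (p/R) powr lam" by (rule powr_mono2'[OF _ pRpos pr2]) (use False in simp)
            then show ?thesis by (simp add: m_def)
          qed
          have "1 = (1/m) * m" using mpos by simp
          also have "\<dots> \<le> C' * (p/R) powr lam"
          proof (rule mult_mono)
            have C'm: "1/m \<le> C'" by (simp add: C'_def)
            moreover have "0 < 1/m" using mpos by simp
            ultimately show "1/m \<le> C'" "0 \<le> C'" by linarith+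
          qed (use pm mpos in auto)
          finally have one: "1 \<le> C' * (p/R) powr lam" .
          have "ereal \<bar>u z\<bar> \<le> ereal 1 * E" using uE by simp
          also have "\<dots> \<le> ereal (C' * (p/R) powr lam) * E"
            by (rule ereal_mult_right_mono[OF _ E0]) (use one in simp)
          finally show ?thesis by (simp add: fz)
        next
          case False
          define X where "X = {d::(real^'n)\<times>real. norm (xpp I x - xpp I (fst d)) < \<rho>/2 \<and> t < snd d \<and> snd d < min t0 (t + (\<rho>/2)^2)}"
          have cx: "continuous_on UNIV (\<lambda>d::(real^'n)\<times>real. norm (xpp I x - xpp I (fst d)))"
            by (intro continuous_intros continuous_on_compose2[OF cont_xpp]) auto
          have oX: "open X" unfolding X_def
            by (intro open_Collect_conj open_Collect_less cx continuous_intros)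
          define t' where "t' = (t + min t0 (t + (\<rho>/2)^2))/2"
          have sq0: "0 < (\<rho>/2)^2" using \<rho>0 by simp
          have "(x, t') \<in> X" using tt sq0 \<rho>0 by (auto simp: X_def t'_def min_def)
          then obtain d where dD: "d \<in> D" and dX: "d \<in> X" using D(2)[OF oX] by blast
          have dX': "norm (xpp I x - xpp I (fst d)) < \<rho>/2" "t < snd d" "snd d < t0" "snd d < t + (\<rho>/2)^2"
            using dX by (auto simp: X_def)
          have gd: "good d"
          proof -
            have "norm (xpp I (fst d)) \<le> norm (xpp I x) + norm (xpp I x - xpp I (fst d))"
              by (metis add.commute diff_add_cancel norm_triangle_ineq4 norm_minus_commute order_refl
                  norm_triangle_sub)
            moreover have "R/2 + 3/2 * \<rho> \<le> \<kappa>1 * R"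
              using mult_right_mono[OF c1, of R] R by (simp add: \<rho>_def algebra_simps)
            ultimately have g1: "norm (xpp I (fst d)) + \<rho> \<le> \<kappa>1 * R" using h(3) dX'(1) by linarith
            have "\<rho>^2 \<le> (\<kappa>1^2 - 1/4) * R^2"
              using mult_right_mono[OF c2, of "R^2"] by (simp add: \<rho>_def power_mult_distrib)
            then have g3: "t0 - (\<kappa>1*R)^2 \<le> snd d - \<rho>^2"
              using h(4) dX'(2) by (simp add: power_mult_distrib algebra_simps power_divide)
            show ?thesis unfolding good_def using g1 g3 dX'(3) by simp
          qed
          have Pd: "P d z" using elim(3) dD gd by blast
          have inz: "z + - (xpp I (fst d), 0) \<in> cylK I K (\<rho>/2) (snd d)"
            using h False dX' by (simp add: zxt cylK_def xp_diff xp_xpp xpp_diff xpp_xpp p_def)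
          have b1: "ereal \<bar>u z\<bar> \<le> ereal (Cp * (p / \<rho>) powr lam) * E"
            using Pd inz unfolding P_def fz by blast
          have "(p / \<rho>) powr lam = (p/R) powr lam * c powr (-lam)"
          proof -
            have eq: "p / \<rho> = (p/R) * (1/c)" using R c0 by (simp add: \<rho>_def field_simps)
            have "(p / \<rho>) powr lam = ((p/R) * (1/c)) powr lam" by (simp only: eq)
            also have "\<dots> = (p/R) powr lam * (1/c) powr lam" by (rule powr_mult)
            finally have "(p / \<rho>) powr lam = (p/R) powr lam * (1/c) powr lam" .
            also have "(1/c) powr lam = c powr (-lam)" using c0 by (simp add: powr_divide powr_minus_divide)
            finally show ?thesis .
          qed
          then have "Cp * (p / \<rho>) powr lam = (Cp * c powr (-lam)) * (p/R) powr lam" by simp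
          also have "\<dots> \<le> C' * (p/R) powr lam"
            by (rule mult_right_mono) (auto simp: C'_def)
          finally have cm: "Cp * (p / \<rho>) powr lam \<le> C' * (p/R) powr lam" .
          have "ereal (Cp * (p / \<rho>) powr lam) * E \<le> ereal (C' * (p/R) powr lam) * E"
            by (rule ereal_mult_right_mono[OF _ E0]) (use cm in simp)
          with b1 have "ereal \<bar>u z\<bar> \<le> ereal (C' * (p/R) powr lam) * E" by (rule order.trans)
          then show ?thesis by (simp add: fz)
        qed
      qed
    qed
  qed
qed


lemma lc_eq:
  assumes cone: "open_cone I K" and "1/2 < \<kappa>1" "\<kappa>1 < 1" "1/2 < \<kappa>2" "\<kappa>2 < 1"
  shows "lambda_c_kappa I K A \<kappa>1 = lambda_c_kappa I K A \<kappa>2"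
proof -
  have "holds_est I K A \<kappa>1 lam \<longleftrightarrow> holds_est I K A \<kappa>2 lam" for lam
    using est_transfer[of I K A \<kappa>2 lam \<kappa>1] est_transfer[of I K A \<kappa>1 lam \<kappa>2] assms by auto
  then show ?thesis unfolding lambda_c_kappa_def by simp
qed

theorem lemma1:
  fixes I :: "('n::finite) set" and K :: "(real^'n) set" and A :: "real \<Rightarrow> real^'n^'n"
    and \<nu> \<kappa>1 \<kappa>2 :: real
  assumes "2 \<le> card I"
    and "open_cone I K" and "C11_cone I K"
    and "coeff_ok \<nu> A"
    and "1/2 < \<kappa>1" and "\<kappa>1 < 1" and "1/2 < \<kappa>2" and "\<kappa>2 < 1"
  shows "lambda_c_kappa I K A \<kappa>1 = lambda_c_kappa I K A \<kappa>2 \<and>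
         lambda_c_kappa I K (\<lambda>t. A (- t)) \<kappa>1 = lambda_c_kappa I K (\<lambda>t. A (- t)) \<kappa>2"
  using lc_eq[OF assms(2,5,6,7,8)] by blast

end
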